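(* Let $\mathcal{A}$ be an abelian category with enough projective and enough injective objects. If both $\mathrm{spdi}(\mathcal{A})$ and $\mathrm{sidp}(\mathcal{A})$ are finite, then $\mathrm{spdi}(\mathcal{A})=\mathrm{sidp}(\mathcal{A})$.
   Context: $\mathrm{spdi}(\mathcal{A})$ is the supremum of the projective dimensions of all injective objects of $\mathcal{A}$; $\mathrm{sidp}(\mathcal{A})$ is the supremum of the injective dimensions of all projective objects of $\mathcal{A}$. *)

theory Defs
  imports Main "HOL-Library.Extended_Nat"
begin

record ('o, 'm) cat =
  Ob  :: "'o set"
  Ar  :: "'m set"
  dom :: "'m \<Rightarrow> 'o"
  cod :: "'m \<Rightarrow> 'o"
  cmp :: "'m \<Rightarrow> 'm \<Rightarrow> 'm"   (* cmp C g f = g \<circ> f *)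
  idm :: "'o \<Rightarrow> 'm"
  add :: "'m \<Rightarrow> 'm \<Rightarrow> 'm"
  ngt :: "'m \<Rightarrow> 'm"
  zer :: "'o \<Rightarrow> 'o \<Rightarrow> 'm"

definition hom :: "('o, 'm) cat \<Rightarrow> 'o \<Rightarrow> 'o \<Rightarrow> 'm set" where
  "hom C X Y = {f \<in> Ar C. dom C f = X \<and> cod C f = Y}"

definition category :: "('o, 'm) cat \<Rightarrow> bool" where
  "category C \<longleftrightarrow>
     (\<forall>f \<in> Ar C. dom C f \<in> Ob C \<and> cod C f \<in> Ob C) \<and>
     (\<forall>X \<in> Ob C. idm C X \<in> hom C X X) \<and>
     (\<forall>X \<in> Ob C. \<forall>Y \<in> Ob C. \<forall>Z \<in> Ob C. \<forall>f \<in> hom C X Y. \<forall>g \<in> hom C Y Z.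
        cmp C g f \<in> hom C X Z) \<and>
     (\<forall>f \<in> Ar C. \<forall>g \<in> Ar C. \<forall>h \<in> Ar C. cod C f = dom C g \<and> cod C g = dom C h \<longrightarrow>
        cmp C h (cmp C g f) = cmp C (cmp C h g) f) \<and>
     (\<forall>f \<in> Ar C. cmp C f (idm C (dom C f)) = f \<and> cmp C (idm C (cod C f)) f = f)"

definition preadditive :: "('o, 'm) cat \<Rightarrow> bool" where
  "preadditive C \<longleftrightarrow> category C \<and>
     (\<forall>X \<in> Ob C. \<forall>Y \<in> Ob C.
        zer C X Y \<in> hom C X Y \<and>
        (\<forall>f \<in> hom C X Y. \<forall>g \<in> hom C X Y. add C f g \<in> hom C X Y \<and> add C f g = add C g f) \<and>
        (\<forall>f \<in> hom C X Y. \<forall>g \<in> hom C X Y. \<forall>h \<in> hom C X Y.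
            add C (add C f g) h = add C f (add C g h)) \<and>
        (\<forall>f \<in> hom C X Y. add C f (zer C X Y) = f \<and> ngt C f \<in> hom C X Y \<and>
            add C f (ngt C f) = zer C X Y)) \<and>
     (\<forall>X \<in> Ob C. \<forall>Y \<in> Ob C. \<forall>Z \<in> Ob C. \<forall>f \<in> hom C X Y. \<forall>g \<in> hom C X Y. \<forall>h \<in> hom C Y Z.
        cmp C h (add C f g) = add C (cmp C h f) (cmp C h g)) \<and>
     (\<forall>X \<in> Ob C. \<forall>Y \<in> Ob C. \<forall>Z \<in> Ob C. \<forall>k \<in> hom C X Y. \<forall>f \<in> hom C Y Z. \<forall>g \<in> hom C Y Z.
        cmp C (add C f g) k = add C (cmp C f k) (cmp C g k))"

definition zero_object :: "('o, 'm) cat \<Rightarrow> 'o \<Rightarrow> bool" where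
  "zero_object C Z \<longleftrightarrow> Z \<in> Ob C \<and>
     (\<forall>X \<in> Ob C. (\<exists>!f. f \<in> hom C Z X) \<and> (\<exists>!f. f \<in> hom C X Z))"

definition biproduct :: "('o, 'm) cat \<Rightarrow> 'o \<Rightarrow> 'o \<Rightarrow> 'o \<Rightarrow> 'm \<Rightarrow> 'm \<Rightarrow> 'm \<Rightarrow> 'm \<Rightarrow> bool" where
  "biproduct C X Y S i1 i2 p1 p2 \<longleftrightarrow> S \<in> Ob C \<and>
     i1 \<in> hom C X S \<and> i2 \<in> hom C Y S \<and> p1 \<in> hom C S X \<and> p2 \<in> hom C S Y \<and>
     cmp C p1 i1 = idm C X \<and> cmp C p2 i2 = idm C Y \<and>
     cmp C p1 i2 = zer C Y X \<and> cmp C p2 i1 = zer C X Y \<and>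
     add C (cmp C i1 p1) (cmp C i2 p2) = idm C S"

definition additive :: "('o, 'm) cat \<Rightarrow> bool" where
  "additive C \<longleftrightarrow> preadditive C \<and> (\<exists>Z. zero_object C Z) \<and>
     (\<forall>X \<in> Ob C. \<forall>Y \<in> Ob C. \<exists>S i1 i2 p1 p2. biproduct C X Y S i1 i2 p1 p2)"

definition mono :: "('o, 'm) cat \<Rightarrow> 'm \<Rightarrow> bool" where
  "mono C f \<longleftrightarrow> f \<in> Ar C \<and>
     (\<forall>g \<in> Ar C. \<forall>h \<in> Ar C. cod C g = dom C f \<and> cod C h = dom C f \<and> dom C g = dom C h \<and>
        cmp C f g = cmp C f h \<longrightarrow> g = h)"

definition epi :: "('o, 'm) cat \<Rightarrow> 'm \<Rightarrow> bool" where
  "epi C f \<longleftrightarrow> f \<in> Ar C \<and>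
     (\<forall>g \<in> Ar C. \<forall>h \<in> Ar C. dom C g = cod C f \<and> dom C h = cod C f \<and> cod C g = cod C h \<and>
        cmp C g f = cmp C h f \<longrightarrow> g = h)"

definition is_kernel :: "('o, 'm) cat \<Rightarrow> 'm \<Rightarrow> 'm \<Rightarrow> bool" where
  "is_kernel C f k \<longleftrightarrow> f \<in> Ar C \<and> k \<in> Ar C \<and> cod C k = dom C f \<and>
     cmp C f k = zer C (dom C k) (cod C f) \<and>
     (\<forall>h \<in> Ar C. cod C h = dom C f \<and> cmp C f h = zer C (dom C h) (cod C f) \<longrightarrow>
        (\<exists>!u. u \<in> hom C (dom C h) (dom C k) \<and> cmp C k u = h))"

definition is_cokernel :: "('o, 'm) cat \<Rightarrow> 'm \<Rightarrow> 'm \<Rightarrow> bool" where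
  "is_cokernel C f c \<longleftrightarrow> f \<in> Ar C \<and> c \<in> Ar C \<and> dom C c = cod C f \<and>
     cmp C c f = zer C (dom C f) (cod C c) \<and>
     (\<forall>h \<in> Ar C. dom C h = cod C f \<and> cmp C h f = zer C (dom C f) (cod C h) \<longrightarrow>
        (\<exists>!u. u \<in> hom C (cod C c) (cod C h) \<and> cmp C u c = h))"

definition abelian :: "('o, 'm) cat \<Rightarrow> bool" where
  "abelian C \<longleftrightarrow> additive C \<and>
     (\<forall>f \<in> Ar C. (\<exists>k. is_kernel C f k) \<and> (\<exists>c. is_cokernel C f c)) \<and>
     (\<forall>f. mono C f \<longrightarrow> (\<exists>g. is_kernel C g f)) \<and>
     (\<forall>f. epi C f \<longrightarrow> (\<exists>g. is_cokernel C g f))"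

definition projective :: "('o, 'm) cat \<Rightarrow> 'o \<Rightarrow> bool" where
  "projective C P \<longleftrightarrow> P \<in> Ob C \<and>
     (\<forall>e f. epi C e \<and> f \<in> hom C P (cod C e) \<longrightarrow> (\<exists>g \<in> hom C P (dom C e). cmp C e g = f))"

definition injective :: "('o, 'm) cat \<Rightarrow> 'o \<Rightarrow> bool" where
  "injective C I \<longleftrightarrow> I \<in> Ob C \<and>
     (\<forall>m f. mono C m \<and> f \<in> hom C (dom C m) I \<longrightarrow> (\<exists>g \<in> hom C (cod C m) I. cmp C g m = f))"

definition enough_projectives :: "('o, 'm) cat \<Rightarrow> bool" where
  "enough_projectives C \<longleftrightarrow>
     (\<forall>X \<in> Ob C. \<exists>P e. projective C P \<and> e \<in> hom C P X \<and> epi C e)"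

definition enough_injectives :: "('o, 'm) cat \<Rightarrow> bool" where
  "enough_injectives C \<longleftrightarrow>
     (\<forall>X \<in> Ob C. \<exists>I m. injective C I \<and> m \<in> hom C X I \<and> mono C m)"

text \<open>Exactness of A --f--> B --g--> D at B: g f = 0 and coker(f) ker(g) = 0
(i.e. im f = ker g).\<close>
definition exact_at :: "('o, 'm) cat \<Rightarrow> 'm \<Rightarrow> 'm \<Rightarrow> bool" where
  "exact_at C f g \<longleftrightarrow> f \<in> Ar C \<and> g \<in> Ar C \<and> cod C f = dom C g \<and>
     cmp C g f = zer C (dom C f) (cod C g) \<and>
     (\<forall>k c. is_kernel C g k \<and> is_cokernel C f c \<longrightarrow> cmp C c k = zer C (dom C k) (cod C c))"

text \<open>A projective resolution of length n:
  0 \<rightarrow> P n --d n--> P (n-1) \<rightarrow> ... \<rightarrow> P 0 --d 0--> X \<rightarrow> 0 exact, all P i projective.\<close>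
definition proj_resolution :: "('o, 'm) cat \<Rightarrow> 'o \<Rightarrow> nat \<Rightarrow> (nat \<Rightarrow> 'o) \<Rightarrow> (nat \<Rightarrow> 'm) \<Rightarrow> bool" where
  "proj_resolution C X n P d \<longleftrightarrow>
     (\<forall>i \<le> n. projective C (P i)) \<and>
     d 0 \<in> hom C (P 0) X \<and>
     (\<forall>i < n. d (Suc i) \<in> hom C (P (Suc i)) (P i)) \<and>
     epi C (d 0) \<and> mono C (d n) \<and>
     (\<forall>i < n. exact_at C (d (Suc i)) (d i))"

text \<open>An injective coresolution of length n:
  0 \<rightarrow> X --d 0--> I 0 \<rightarrow> ... \<rightarrow> I (n-1) --d n--> I n \<rightarrow> 0 exact, all I i injective.\<close>
definition inj_resolution :: "('o, 'm) cat \<Rightarrow> 'o \<Rightarrow> nat \<Rightarrow> (nat \<Rightarrow> 'o) \<Rightarrow> (nat \<Rightarrow> 'm) \<Rightarrow> bool" where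
  "inj_resolution C X n I d \<longleftrightarrow>
     (\<forall>i \<le> n. injective C (I i)) \<and>
     d 0 \<in> hom C X (I 0) \<and>
     (\<forall>i < n. d (Suc i) \<in> hom C (I i) (I (Suc i))) \<and>
     mono C (d 0) \<and> epi C (d n) \<and>
     (\<forall>i < n. exact_at C (d i) (d (Suc i)))"

definition proj_dim :: "('o, 'm) cat \<Rightarrow> 'o \<Rightarrow> enat" where
  "proj_dim C X = (INF n \<in> {n. \<exists>P d. proj_resolution C X n P d}. enat n)"

definition inj_dim :: "('o, 'm) cat \<Rightarrow> 'o \<Rightarrow> enat" where
  "inj_dim C X = (INF n \<in> {n. \<exists>I d. inj_resolution C X n I d}. enat n)"

definition spdi :: "('o, 'm) cat \<Rightarrow> enat" where
  "spdi C = (SUP I \<in> {I. injective C I}. proj_dim C I)"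

definition sidp :: "('o, 'm) cat \<Rightarrow> enat" where
  "sidp C = (SUP P \<in> {P. projective C P}. inj_dim C P)"

end

theory Submission
  imports Defs
begin


lemma homD: "f \<in> hom C X Y \<Longrightarrow> f \<in> Ar C \<and> dom C f = X \<and> cod C f = Y"
  by (simp add: hom_def)
lemma homI: "f \<in> Ar C \<Longrightarrow> dom C f = X \<Longrightarrow> cod C f = Y \<Longrightarrow> f \<in> hom C X Y"
  by (simp add: hom_def)

locale ab =
  fixes C :: "('o,'m) cat"
  assumes abel: "abelian C"
begin

lemma pre: "preadditive C"
  using abel unfolding abelian_def additive_def by blast
lemma cat: "category C"
  using pre unfolding preadditive_def by blast

lemma hom_ob: "f \<in> hom C X Y \<Longrightarrow> X \<in> Ob C \<and> Y \<in> Ob C"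
  using cat by (auto simp: category_def hom_def)

lemma comp_hom[intro]: "f \<in> hom C X Y \<Longrightarrow> g \<in> hom C Y Z \<Longrightarrow> cmp C g f \<in> hom C X Z"
  using cat hom_ob[of f X Y] hom_ob[of g Y Z] unfolding category_def by blast

lemma assoc: "f \<in> hom C X Y \<Longrightarrow> g \<in> hom C Y Z \<Longrightarrow> h \<in> hom C Z W \<Longrightarrow>
   cmp C h (cmp C g f) = cmp C (cmp C h g) f"
  using cat unfolding category_def hom_def by auto

lemma id_hom: "X \<in> Ob C \<Longrightarrow> idm C X \<in> hom C X X"
  using cat unfolding category_def by auto

lemma id_l: "f \<in> hom C X Y \<Longrightarrow> cmp C (idm C Y) f = f"
  using cat unfolding category_def hom_def by auto
lemma id_r: "f \<in> hom C X Y \<Longrightarrow> cmp C f (idm C X) = f"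
  using cat unfolding category_def hom_def by auto

lemma Ar_hom: "f \<in> Ar C \<Longrightarrow> f \<in> hom C (dom C f) (cod C f)"
  by (simp add: hom_def)

lemma zer_hom: "X \<in> Ob C \<Longrightarrow> Y \<in> Ob C \<Longrightarrow> zer C X Y \<in> hom C X Y"
  using pre unfolding preadditive_def by auto

lemma preXY: assumes "f \<in> hom C X Y" shows
  "zer C X Y \<in> hom C X Y \<and>
        (\<forall>f \<in> hom C X Y. \<forall>g \<in> hom C X Y. add C f g \<in> hom C X Y \<and> add C f g = add C g f) \<and>
        (\<forall>f \<in> hom C X Y. \<forall>g \<in> hom C X Y. \<forall>h \<in> hom C X Y.
            add C (add C f g) h = add C f (add C g h)) \<and>
        (\<forall>f \<in> hom C X Y. add C f (zer C X Y) = f \<and> ngt C f \<in> hom C X Y \<and>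
            add C f (ngt C f) = zer C X Y)"
proof -
  have "X \<in> Ob C" "Y \<in> Ob C" using hom_ob assms by auto
  then show ?thesis using pre unfolding preadditive_def by blast
qed

lemma add_hom: "f \<in> hom C X Y \<Longrightarrow> g \<in> hom C X Y \<Longrightarrow> add C f g \<in> hom C X Y"
  using preXY by blast
lemma add_comm: "f \<in> hom C X Y \<Longrightarrow> g \<in> hom C X Y \<Longrightarrow> add C f g = add C g f"
  using preXY by blast
lemma add_assoc: "f \<in> hom C X Y \<Longrightarrow> g \<in> hom C X Y \<Longrightarrow> h \<in> hom C X Y \<Longrightarrow>
   add C (add C f g) h = add C f (add C g h)"
  using preXY by blast
lemma add_zero: "f \<in> hom C X Y \<Longrightarrow> add C f (zer C X Y) = f"
  using preXY by blast
lemma ngt_hom: "f \<in> hom C X Y \<Longrightarrow> ngt C f \<in> hom C X Y"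
  using preXY by blast
lemma add_ngt: "f \<in> hom C X Y \<Longrightarrow> add C f (ngt C f) = zer C X Y"
  using preXY by blast
lemma comp_add_l: "f \<in> hom C X Y \<Longrightarrow> g \<in> hom C X Y \<Longrightarrow> h \<in> hom C Y Z \<Longrightarrow>
   cmp C h (add C f g) = add C (cmp C h f) (cmp C h g)"
proof -
  assume a: "f \<in> hom C X Y" "g \<in> hom C X Y" "h \<in> hom C Y Z"
  then have "X \<in> Ob C" "Y \<in> Ob C" "Z \<in> Ob C" using hom_ob by auto
  with a pre show ?thesis unfolding preadditive_def by blast
qed
lemma comp_add_r: "k \<in> hom C X Y \<Longrightarrow> f \<in> hom C Y Z \<Longrightarrow> g \<in> hom C Y Z \<Longrightarrow>
   cmp C (add C f g) k = add C (cmp C f k) (cmp C g k)"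
proof -
  assume a: "k \<in> hom C X Y" "f \<in> hom C Y Z" "g \<in> hom C Y Z"
  then have "X \<in> Ob C" "Y \<in> Ob C" "Z \<in> Ob C" using hom_ob by auto
  with a pre show ?thesis unfolding preadditive_def by blast
qed

lemma zero_add: "f \<in> hom C X Y \<Longrightarrow> add C (zer C X Y) f = f"
  using add_comm add_zero zer_hom hom_ob by metis

lemma idem_zero: assumes x: "x \<in> hom C X Y" and e: "add C x x = x" shows "x = zer C X Y"
proof -
  have "x = add C x (add C x (ngt C x))" using add_ngt[OF x] add_zero[OF x] by simp
  also have "\<dots> = add C (add C x x) (ngt C x)" using add_assoc x ngt_hom by metis
  also have "\<dots> = zer C X Y" using e add_ngt[OF x] by simp
  finally show ?thesis .
qed

lemma comp_zero_r: "h \<in> hom C Y Z \<Longrightarrow> X \<in> Ob C \<Longrightarrow> cmp C h (zer C X Y) = zer C X Z"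
proof -
  assume h: "h \<in> hom C Y Z" and X: "X \<in> Ob C"
  have z: "zer C X Y \<in> hom C X Y" using zer_hom X hom_ob h by blast
  have "cmp C h (zer C X Y) = cmp C h (add C (zer C X Y) (zer C X Y))" using add_zero z by simp
  also have "\<dots> = add C (cmp C h (zer C X Y)) (cmp C h (zer C X Y))" using comp_add_l z h by blast
  finally show ?thesis using idem_zero comp_hom z h by metis
qed

lemma comp_zero_l: "k \<in> hom C X Y \<Longrightarrow> Z \<in> Ob C \<Longrightarrow> cmp C (zer C Y Z) k = zer C X Z"
proof -
  assume k: "k \<in> hom C X Y" and Z: "Z \<in> Ob C"
  have z: "zer C Y Z \<in> hom C Y Z" using zer_hom Z hom_ob k by blast
  have "cmp C (zer C Y Z) k = cmp C (add C (zer C Y Z) (zer C Y Z)) k" using add_zero z by simp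
  also have "\<dots> = add C (cmp C (zer C Y Z) k) (cmp C (zer C Y Z) k)" using comp_add_r z k by blast
  finally show ?thesis using idem_zero comp_hom z k by metis
qed

lemma neg_unique: assumes a: "a \<in> hom C X Y" and b: "b \<in> hom C X Y" and s: "add C a b = zer C X Y"
  shows "b = ngt C a"
proof -
  have "b = add C b (add C a (ngt C a))" using add_zero b add_ngt a by simp
  also have "\<dots> = add C (add C a b) (ngt C a)" using add_assoc add_comm a b ngt_hom by metis
  also have "\<dots> = ngt C a" using s zero_add ngt_hom a by simp
  finally show ?thesis .
qed

lemma neg_zero: "X \<in> Ob C \<Longrightarrow> Y \<in> Ob C \<Longrightarrow> ngt C (zer C X Y) = zer C X Y"
  using neg_unique zer_hom add_zero by metis

lemma comp_ngt_l: assumes f: "f \<in> hom C X Y" and h: "h \<in> hom C Y Z"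
  shows "cmp C h (ngt C f) = ngt C (cmp C h f)"
proof -
  have "add C (cmp C h f) (cmp C h (ngt C f)) = cmp C h (add C f (ngt C f))"
    using comp_add_l f ngt_hom h by metis
  also have "\<dots> = zer C X Z" using add_ngt f comp_zero_r h hom_ob by metis
  finally show ?thesis using neg_unique comp_hom f h ngt_hom by metis
qed

lemma comp_ngt_r: assumes k: "k \<in> hom C X Y" and f: "f \<in> hom C Y Z"
  shows "cmp C (ngt C f) k = ngt C (cmp C f k)"
proof -
  have "add C (cmp C f k) (cmp C (ngt C f) k) = cmp C (add C f (ngt C f)) k"
    using comp_add_r f ngt_hom k by metis
  also have "\<dots> = zer C X Z" using add_ngt f comp_zero_l k hom_ob by metis
  finally show ?thesis using neg_unique comp_hom f k ngt_hom by metis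
qed

lemma sub_zero_eq: assumes a: "a \<in> hom C X Y" and b: "b \<in> hom C X Y"
  and s: "add C a (ngt C b) = zer C X Y" shows "a = b"
proof -
  have "a = add C a (add C (ngt C b) b)" using add_zero a add_ngt b add_comm ngt_hom by metis
  also have "\<dots> = add C (add C a (ngt C b)) b" using add_assoc a b ngt_hom by metis
  also have "\<dots> = b" using s zero_add b by simp
  finally show ?thesis .
qed

lemma sub_self: "a \<in> hom C X Y \<Longrightarrow> add C a (ngt C a) = zer C X Y" by (rule add_ngt)

end


context ab begin

lemma kernel_hom: "is_kernel C g k \<Longrightarrow> g \<in> hom C B D \<Longrightarrow> k \<in> hom C (dom C k) B"
  unfolding is_kernel_def hom_def by auto
lemma kernel_zero: "is_kernel C g k \<Longrightarrow> g \<in> hom C B D \<Longrightarrow> cmp C g k = zer C (dom C k) D"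
  unfolding is_kernel_def hom_def by auto
lemma kernel_univ': assumes k: "is_kernel C g k" and g: "g \<in> hom C B D" and h: "h \<in> hom C W B"
   and z: "cmp C g h = zer C W D" shows "\<exists>!u. u \<in> hom C W (dom C k) \<and> cmp C k u = h"
proof -
  have all: "\<forall>h\<in>Ar C. cod C h = dom C g \<and> cmp C g h = zer C (dom C h) (cod C g) \<longrightarrow>
        (\<exists>!u. u \<in> hom C (dom C h) (dom C k) \<and> cmp C k u = h)" using k unfolding is_kernel_def by blast
  have hA: "h \<in> Ar C" "dom C h = W" "cod C h = B" using homD[OF h] by auto
  have gA: "dom C g = B" "cod C g = D" using homD[OF g] by auto
  have "cod C h = dom C g \<and> cmp C g h = zer C (dom C h) (cod C g) \<longrightarrow>
        (\<exists>!u. u \<in> hom C (dom C h) (dom C k) \<and> cmp C k u = h)" using all hA(1) by (rule bspec)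
  then show ?thesis using hA gA z by simp
qed
lemma kernel_fac: "is_kernel C g k \<Longrightarrow> g \<in> hom C B D \<Longrightarrow> h \<in> hom C W B \<Longrightarrow>
   cmp C g h = zer C W D \<Longrightarrow> \<exists>u \<in> hom C W (dom C k). cmp C k u = h"
  using kernel_univ' by blast
lemma kernel_uniq: "is_kernel C g k \<Longrightarrow> g \<in> hom C B D \<Longrightarrow> h \<in> hom C W B \<Longrightarrow>
   cmp C g h = zer C W D \<Longrightarrow> u \<in> hom C W (dom C k) \<Longrightarrow> v \<in> hom C W (dom C k) \<Longrightarrow>
   cmp C k u = h \<Longrightarrow> cmp C k v = h \<Longrightarrow> u = v"
  using kernel_univ' by blast

lemma cokernel_hom: "is_cokernel C f c \<Longrightarrow> f \<in> hom C A B \<Longrightarrow> c \<in> hom C B (cod C c)"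
  unfolding is_cokernel_def hom_def by auto
lemma cokernel_zero: "is_cokernel C f c \<Longrightarrow> f \<in> hom C A B \<Longrightarrow> cmp C c f = zer C A (cod C c)"
  unfolding is_cokernel_def hom_def by auto
lemma cokernel_fac: assumes c: "is_cokernel C f c" and f: "f \<in> hom C A B" and h: "h \<in> hom C B W"
   and z: "cmp C h f = zer C A W" shows "\<exists>u \<in> hom C (cod C c) W. cmp C u c = h"
proof -
  have all: "\<forall>h\<in>Ar C. dom C h = cod C f \<and> cmp C h f = zer C (dom C f) (cod C h) \<longrightarrow>
        (\<exists>!u. u \<in> hom C (cod C c) (cod C h) \<and> cmp C u c = h)" using c unfolding is_cokernel_def by blast
  have hA: "h \<in> Ar C" "dom C h = B" "cod C h = W" using homD[OF h] by auto
  have fA: "dom C f = A" "cod C f = B" using homD[OF f] by auto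
  have "dom C h = cod C f \<and> cmp C h f = zer C (dom C f) (cod C h) \<longrightarrow>
        (\<exists>!u. u \<in> hom C (cod C c) (cod C h) \<and> cmp C u c = h)" using all hA(1) by (rule bspec)
  then show ?thesis using hA fA z by auto
qed

lemma ex_kernel: "g \<in> hom C B D \<Longrightarrow> \<exists>k. is_kernel C g k"
  using abel unfolding abelian_def hom_def by auto
lemma ex_cokernel: "g \<in> hom C B D \<Longrightarrow> \<exists>k. is_cokernel C g k"
  using abel unfolding abelian_def hom_def by auto
lemma mono_kernel: "mono C f \<Longrightarrow> \<exists>g. is_kernel C g f"
  using abel unfolding abelian_def by auto
lemma epi_cokernel: "epi C f \<Longrightarrow> \<exists>g. is_cokernel C g f"
  using abel unfolding abelian_def by auto

lemma mono_cancel: "mono C m \<Longrightarrow> m \<in> hom C X Y \<Longrightarrow> x \<in> hom C W X \<Longrightarrow> y \<in> hom C W X \<Longrightarrow>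
   cmp C m x = cmp C m y \<Longrightarrow> x = y"
  unfolding mono_def hom_def by auto
lemma epi_cancel: "epi C e \<Longrightarrow> e \<in> hom C X Y \<Longrightarrow> x \<in> hom C Y W \<Longrightarrow> y \<in> hom C Y W \<Longrightarrow>
   cmp C x e = cmp C y e \<Longrightarrow> x = y"
  unfolding epi_def hom_def by auto

lemma mono_zero: assumes m: "mono C m" and mh: "m \<in> hom C X Y" and x: "x \<in> hom C W X"
  and mx: "cmp C m x = zer C W Y"
  shows "x = zer C W X"
proof -
  have W: "W \<in> Ob C" using hom_ob x by blast
  have X: "X \<in> Ob C" using hom_ob x by blast
  have "cmp C m (zer C W X) = zer C W Y" using comp_zero_r[OF mh W] .
  then show ?thesis using mono_cancel[OF m mh x zer_hom[OF W X]] mx by simp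
qed

lemma kernel_mono: assumes k: "is_kernel C g k" and g: "g \<in> hom C B D" shows "mono C k"
  unfolding mono_def
proof (intro conjI ballI impI)
  show "k \<in> Ar C" using k unfolding is_kernel_def by auto
  fix x y assume x: "x \<in> Ar C" and y: "y \<in> Ar C"
    and c: "cod C x = dom C k \<and> cod C y = dom C k \<and> dom C x = dom C y \<and> cmp C k x = cmp C k y"
  let ?W = "dom C x"
  have kh: "k \<in> hom C (dom C k) B" by (rule kernel_hom[OF k g])
  have xh: "x \<in> hom C ?W (dom C k)" using x c by (simp add: hom_def)
  have yh: "y \<in> hom C ?W (dom C k)" using y c by (simp add: hom_def)
  have D: "D \<in> Ob C" using hom_ob g by blast
  have "cmp C g (cmp C k x) = cmp C (cmp C g k) x" using assoc[OF xh kh g] .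
  also have "\<dots> = zer C ?W D" using kernel_zero[OF k g] comp_zero_l[OF xh D] by simp
  finally have z: "cmp C g (cmp C k x) = zer C ?W D" .
  have kx: "cmp C k x \<in> hom C ?W B" using xh kh by blast
  show "x = y"
    by (rule kernel_uniq[OF k g kx z xh yh]) (use c in auto)
qed

lemma mono_comp: assumes mi: "mono C i" and mj: "mono C j" and j: "j \<in> hom C J I" and i: "i \<in> hom C I B"
  shows "mono C (cmp C i j)"
  unfolding mono_def
proof (intro conjI ballI impI)
  have ij: "cmp C i j \<in> hom C J B" using i j by blast
  then show "cmp C i j \<in> Ar C" by (simp add: hom_def)
  fix x y assume x: "x \<in> Ar C" and y: "y \<in> Ar C"
    and c: "cod C x = dom C (cmp C i j) \<and> cod C y = dom C (cmp C i j) \<and> dom C x = dom C y \<and>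
       cmp C (cmp C i j) x = cmp C (cmp C i j) y"
  have xh: "x \<in> hom C (dom C x) J" using x c ij by (simp add: hom_def)
  have yh: "y \<in> hom C (dom C x) J" using y c ij by (simp add: hom_def)
  have "cmp C i (cmp C j x) = cmp C i (cmp C j y)" using c assoc[OF xh j i] assoc[OF yh j i] by simp
  then have "cmp C j x = cmp C j y" using mono_cancel[OF mi i] comp_hom xh yh j by blast
  then show "x = y" using mono_cancel[OF mj j xh yh] by blast
qed

lemma mono_of_comp: assumes m: "mono C (cmp C k e)" and e: "e \<in> hom C A B" and k: "k \<in> hom C B D"
  shows "mono C e"
  unfolding mono_def
proof (intro conjI ballI impI)
  show "e \<in> Ar C" using e by (simp add: hom_def)
  fix x y assume x: "x \<in> Ar C" and y: "y \<in> Ar C"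
    and c: "cod C x = dom C e \<and> cod C y = dom C e \<and> dom C x = dom C y \<and> cmp C e x = cmp C e y"
  have xh: "x \<in> hom C (dom C x) A" using x c e by (simp add: hom_def)
  have yh: "y \<in> hom C (dom C x) A" using y c e by (simp add: hom_def)
  have "cmp C (cmp C k e) x = cmp C (cmp C k e) y" using assoc[OF xh e k] assoc[OF yh e k] c by simp
  then show "x = y" using mono_cancel[OF m comp_hom[OF e k] xh yh] by simp
qed

lemma epi_by_zero: assumes a: "a \<in> hom C A I"
  and z: "\<And>Z u. u \<in> hom C I Z \<Longrightarrow> cmp C u a = zer C A Z \<Longrightarrow> u = zer C I Z"
  shows "epi C a"
  unfolding epi_def
proof (intro conjI ballI impI)
  show "a \<in> Ar C" using a by (simp add: hom_def)
  fix x y assume x: "x \<in> Ar C" and y: "y \<in> Ar C"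
    and c: "dom C x = cod C a \<and> dom C y = cod C a \<and> cod C x = cod C y \<and> cmp C x a = cmp C y a"
  let ?Z = "cod C x"
  have xh: "x \<in> hom C I ?Z" using x c a by (simp add: hom_def)
  have yh: "y \<in> hom C I ?Z" using y c a by (simp add: hom_def)
  have "cmp C (add C x (ngt C y)) a = add C (cmp C x a) (cmp C (ngt C y) a)"
    using comp_add_r[OF a xh ngt_hom[OF yh]] .
  also have "\<dots> = add C (cmp C x a) (ngt C (cmp C y a))" using comp_ngt_r[OF a yh] by simp
  also have "\<dots> = zer C A ?Z" using c add_ngt[OF comp_hom[OF a yh]] by simp
  finally have "add C x (ngt C y) = zer C I ?Z" using z add_hom[OF xh ngt_hom[OF yh]] by blast
  then show "x = y" using sub_zero_eq[OF xh yh] by blast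
qed

lemma image_epi:
  assumes f: "f \<in> hom C A B" and c: "is_cokernel C f c" and i: "is_kernel C c i"
    and a: "a \<in> hom C A (dom C i)" and fa: "cmp C i a = f"
  shows "epi C a"
proof -
  let ?E = "cod C c" and ?I = "dom C i"
  have ch: "c \<in> hom C B ?E" by (rule cokernel_hom[OF c f])
  have ih: "i \<in> hom C ?I B" by (rule kernel_hom[OF i ch])
  have imono: "mono C i" by (rule kernel_mono[OF i ch])
  have ci: "cmp C c i = zer C ?I ?E" by (rule kernel_zero[OF i ch])
  show ?thesis
  proof (rule epi_by_zero[OF a])
    fix Z u assume u: "u \<in> hom C ?I Z" and ua: "cmp C u a = zer C A Z"
    obtain j where j: "is_kernel C u j" using ex_kernel u by blast
    let ?J = "dom C j"
    have jh: "j \<in> hom C ?J ?I" by (rule kernel_hom[OF j u])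
    have jmono: "mono C j" by (rule kernel_mono[OF j u])
    have uj: "cmp C u j = zer C ?J Z" by (rule kernel_zero[OF j u])
    obtain a' where a': "a' \<in> hom C A ?J" "cmp C j a' = a" using kernel_fac[OF j u a ua] by blast
    have mh: "cmp C i j \<in> hom C ?J B" using jh ih by blast
    have mm: "mono C (cmp C i j)" using mono_comp[OF imono jmono jh ih] .
    obtain h where h: "is_kernel C h (cmp C i j)" using mono_kernel mm by blast
    have "h \<in> Ar C" "dom C h = cod C (cmp C i j)" using h unfolding is_kernel_def by auto
    then have hh: "h \<in> hom C B (cod C h)" using homD[OF mh] by (simp add: hom_def)
    let ?H = "cod C h"
    have hm: "cmp C h (cmp C i j) = zer C ?J ?H" using kernel_zero[OF h hh] homD[OF mh] by simp
    have H: "?H \<in> Ob C" using hom_ob hh by blast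
    have "cmp C h f = cmp C h (cmp C (cmp C i j) a')" using fa a'(2) assoc[OF a'(1) jh ih] by simp
    also have "\<dots> = cmp C (cmp C h (cmp C i j)) a'" using assoc[OF a'(1) mh hh] .
    also have "\<dots> = zer C A ?H" using hm comp_zero_l[OF a'(1) H] by simp
    finally have hf: "cmp C h f = zer C A ?H" .
    obtain t where t: "t \<in> hom C ?E ?H" "cmp C t c = h" using cokernel_fac[OF c f hh hf] by blast
    have I: "?I \<in> Ob C" using hom_ob ih by blast
    have "cmp C h i = cmp C t (cmp C c i)" using assoc[OF ih ch t(1)] t(2) by simp
    also have "\<dots> = zer C ?I ?H" using ci comp_zero_r[OF t(1) I] by simp
    finally have hi: "cmp C h i = zer C ?I ?H" .
    obtain w where w: "w \<in> hom C ?I (dom C (cmp C i j))" "cmp C (cmp C i j) w = i"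
      using kernel_fac[OF h hh ih hi] by blast
    have w1: "w \<in> hom C ?I ?J" using w(1) homD[OF mh] by simp
    have "cmp C i (cmp C j w) = cmp C i (idm C ?I)" using w(2) assoc[OF w1 jh ih] id_r[OF ih] by simp
    then have jw: "cmp C j w = idm C ?I"
      using mono_cancel[OF imono ih comp_hom[OF w1 jh] id_hom[OF I]] by blast
    have "u = cmp C u (cmp C j w)" using jw id_r[OF u] by simp
    also have "\<dots> = cmp C (cmp C u j) w" using assoc[OF w1 jh u] .
    also have "\<dots> = zer C ?I Z" using uj comp_zero_l[OF w1] hom_ob[OF u] by simp
    finally show "u = zer C ?I Z" .
  qed
qed

lemma lift_exact:
  assumes ex: "exact_at C f g" and f: "f \<in> hom C A B" and g: "g \<in> hom C B D"
    and Q: "projective C Q" and x: "x \<in> hom C Q B" and gx: "cmp C g x = zer C Q D"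
  shows "\<exists>y \<in> hom C Q A. cmp C f y = x"
proof -
  obtain k where k: "is_kernel C g k" using ex_kernel g by blast
  obtain c where c: "is_cokernel C f c" using ex_cokernel f by blast
  let ?K = "dom C k" and ?E = "cod C c"
  have kh: "k \<in> hom C ?K B" by (rule kernel_hom[OF k g])
  have ch: "c \<in> hom C B ?E" by (rule cokernel_hom[OF c f])
  have "cmp C c k = zer C (dom C k) (cod C c)" using ex k c unfolding exact_at_def by blast
  then have ck: "cmp C c k = zer C ?K ?E" by simp
  obtain i where i: "is_kernel C c i" using ex_kernel ch by blast
  let ?I = "dom C i"
  have ih: "i \<in> hom C ?I B" by (rule kernel_hom[OF i ch])
  obtain x' where x': "x' \<in> hom C Q ?K" "cmp C k x' = x" using kernel_fac[OF k g x gx] by blast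
  obtain z where z: "z \<in> hom C ?K ?I" "cmp C i z = k" using kernel_fac[OF i ch kh ck] by blast
  have cf: "cmp C c f = zer C A ?E" by (rule cokernel_zero[OF c f])
  obtain a where a: "a \<in> hom C A ?I" "cmp C i a = f" using kernel_fac[OF i ch f cf] by blast
  have ae: "epi C a" by (rule image_epi[OF f c i a])
  have zx: "cmp C z x' \<in> hom C Q ?I" using z x' by blast
  have PQ: "\<forall>e f. epi C e \<and> f \<in> hom C Q (cod C e) \<longrightarrow> (\<exists>g \<in> hom C Q (dom C e). cmp C e g = f)"
    using Q unfolding projective_def by blast
  have "\<exists>g \<in> hom C Q (dom C a). cmp C a g = cmp C z x'"
    using spec[OF spec[OF PQ, of a], of "cmp C z x'"] ae zx homD[OF a(1)] by simp
  then obtain y where y: "y \<in> hom C Q A" "cmp C a y = cmp C z x'" using homD[OF a(1)] by auto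
  have "cmp C f y = cmp C i (cmp C a y)" using a(2) assoc[OF y(1) a(1) ih] by simp
  also have "\<dots> = x" using y(2) z(2) x'(2) assoc[OF x'(1) z(1) ih] by simp
  finally show ?thesis using y(1) by blast
qed

lemma epi_fac:
  assumes qe: "epi C q" and q: "q \<in> hom C A B" and i: "is_kernel C q \<iota>"
    and g: "g \<in> hom C A Z" and gi: "cmp C g \<iota> = zer C (dom C \<iota>) Z"
  shows "\<exists>s \<in> hom C B Z. cmp C s q = g"
proof -
  obtain w where w: "is_cokernel C w q" using epi_cokernel qe by blast
  have "w \<in> Ar C" "cod C w = dom C q" using w unfolding is_cokernel_def by auto
  then have wh: "w \<in> hom C (dom C w) A" using homD[OF q] by (simp add: hom_def)
  have qw: "cmp C q w = zer C (dom C w) B" using cokernel_zero[OF w wh] homD[OF q] by simp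
  obtain u where u: "u \<in> hom C (dom C w) (dom C \<iota>)" "cmp C \<iota> u = w"
    using kernel_fac[OF i q wh qw] by blast
  have ih: "\<iota> \<in> hom C (dom C \<iota>) A" by (rule kernel_hom[OF i q])
  have "cmp C g w = cmp C (cmp C g \<iota>) u" using assoc[OF u(1) ih g] u(2) by simp
  also have "\<dots> = zer C (dom C w) Z" using gi comp_zero_l[OF u(1)] hom_ob[OF g] by simp
  finally have gw: "cmp C g w = zer C (dom C w) Z" .
  obtain s where s: "s \<in> hom C (cod C q) Z" "cmp C s q = g" using cokernel_fac[OF w wh g gw] by blast
  then show ?thesis using homD[OF q] by auto
qed

lemma kernel_comp_mono:
  assumes x: "is_kernel C b x" and b: "b \<in> hom C A B" and k: "k \<in> hom C B D" and m: "mono C k"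
  shows "is_kernel C (cmp C k b) x"
proof -
  have kb: "cmp C k b \<in> hom C A D" using b k by blast
  have xh: "x \<in> hom C (dom C x) A" by (rule kernel_hom[OF x b])
  have bx: "cmp C b x = zer C (dom C x) B" by (rule kernel_zero[OF x b])
  have X: "dom C x \<in> Ob C" using hom_ob xh by blast
  have z1: "cmp C (cmp C k b) x = zer C (dom C x) D"
    using assoc[OF xh b k] bx comp_zero_r[OF k X] by simp
  have eqv: "\<And>h W. h \<in> hom C W A \<Longrightarrow> (cmp C (cmp C k b) h = zer C W D) = (cmp C b h = zer C W B)"
  proof -
    fix h W assume h: "h \<in> hom C W A"
    have W: "W \<in> Ob C" using hom_ob h by blast
    have e1: "cmp C (cmp C k b) h = cmp C k (cmp C b h)" using assoc[OF h b k] by simp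
    have e2: "cmp C k (zer C W B) = zer C W D" using comp_zero_r[OF k W] .
    show "(cmp C (cmp C k b) h = zer C W D) = (cmp C b h = zer C W B)"
      using mono_zero[OF m k comp_hom[OF h b]] e1 e2 by auto
  qed
  show ?thesis unfolding is_kernel_def
  proof (intro conjI ballI impI)
    show "cmp C k b \<in> Ar C" "x \<in> Ar C" using kb xh by (auto simp: hom_def)
    show "cod C x = dom C (cmp C k b)" using kb xh by (auto simp: hom_def)
    show "cmp C (cmp C k b) x = zer C (dom C x) (cod C (cmp C k b))" using z1 kb by (simp add: hom_def)
    fix h assume h: "h \<in> Ar C" and hc: "cod C h = dom C (cmp C k b) \<and>
        cmp C (cmp C k b) h = zer C (dom C h) (cod C (cmp C k b))"
    have hh: "h \<in> hom C (dom C h) A" using h hc kb by (simp add: hom_def)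
    have "cmp C b h = zer C (dom C h) B" using eqv[OF hh] hc kb by (simp add: hom_def)
    then show "\<exists>!u. u \<in> hom C (dom C h) (dom C x) \<and> cmp C x u = h"
      using kernel_univ'[OF x b hh] by blast
  qed
qed

lemma exact_transfer:
  assumes ex: "exact_at C a (cmp C k b)" and a: "a \<in> hom C A0 A" and b: "b \<in> hom C A B"
    and k: "k \<in> hom C B D" and m: "mono C k"
  shows "exact_at C a b"
proof -
  have A0: "A0 \<in> Ob C" using hom_ob a by blast
  have kb: "cmp C k b \<in> hom C A D" using b k by blast
  have "cmp C (cmp C k b) a = zer C (dom C a) (cod C (cmp C k b))" using ex unfolding exact_at_def by blast
  then have "cmp C (cmp C k b) a = zer C A0 D" using homD[OF a] homD[OF kb] by simp
  then have "cmp C k (cmp C b a) = zer C A0 D" using assoc[OF a b k] by simp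
  then have ba: "cmp C b a = zer C A0 B" using mono_zero[OF m k comp_hom[OF a b]] by simp
  show ?thesis unfolding exact_at_def
  proof (intro conjI allI impI)
    show "a \<in> Ar C" "b \<in> Ar C" "cod C a = dom C b" using a b by (auto simp: hom_def)
    show "cmp C b a = zer C (dom C a) (cod C b)" using ba a b by (simp add: hom_def)
    fix k' c assume kc: "is_kernel C b k' \<and> is_cokernel C a c"
    then have "is_kernel C (cmp C k b) k'" using kernel_comp_mono b k m by blast
    then show "cmp C c k' = zer C (dom C k') (cod C c)" using ex kc unfolding exact_at_def by blast
  qed
qed

end


definition op :: "('o,'m) cat \<Rightarrow> ('o,'m) cat" where
  "op C = \<lparr>Ob = Ob C, Ar = Ar C, dom = cod C, cod = dom C, cmp = (\<lambda>g f. cmp C f g),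
     idm = idm C, add = add C, ngt = ngt C, zer = (\<lambda>X Y. zer C Y X)\<rparr>"

lemma op_simps[simp]: "Ob (op C) = Ob C" "Ar (op C) = Ar C" "dom (op C) = cod C" "cod (op C) = dom C"
  "cmp (op C) g f = cmp C f g" "idm (op C) = idm C" "add (op C) = add C" "ngt (op C) = ngt C"
  "zer (op C) X Y = zer C Y X"
  by (simp_all add: op_def)

lemma hom_op[simp]: "hom (op C) X Y = hom C Y X"
  by (auto simp: hom_def)

lemma category_op: "category C \<Longrightarrow> category (op C)"
  unfolding category_def by (simp add: hom_def)

lemma preadditive_op: assumes p: "preadditive C" shows "preadditive (op C)"
proof -
  have c: "category C" using p unfolding preadditive_def by blast
  show ?thesis unfolding preadditive_def op_simps hom_op
    apply (intro conjI)
    subgoal using category_op[OF c] .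
    subgoal using p unfolding preadditive_def by blast
    subgoal using p unfolding preadditive_def by blast
    subgoal using p unfolding preadditive_def by blast
    done
qed

lemma zero_object_op: "zero_object C Z \<Longrightarrow> zero_object (op C) Z"
  unfolding zero_object_def by simp

lemma biproduct_op: "biproduct C X Y S i1 i2 p1 p2 \<Longrightarrow> biproduct (op C) X Y S p1 p2 i1 i2"
  unfolding biproduct_def by simp

lemma additive_op: assumes a: "additive C" shows "additive (op C)"
proof -
  have conj: "preadditive C \<and> (\<exists>Z. zero_object C Z) \<and>
     (\<forall>X \<in> Ob C. \<forall>Y \<in> Ob C. \<exists>S i1 i2 p1 p2. biproduct C X Y S i1 i2 p1 p2)"
    using a unfolding additive_def .
  have p: "preadditive C" using conj[THEN conjunct1] .
  have z: "\<exists>Z. zero_object C Z" using conj[THEN conjunct2, THEN conjunct1] .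
  have bp: "\<forall>X\<in>Ob C. \<forall>Y\<in>Ob C. \<exists>S i1 i2 p1 p2. biproduct C X Y S i1 i2 p1 p2"
    using conj[THEN conjunct2, THEN conjunct2] .
  have "\<forall>X\<in>Ob (op C). \<forall>Y\<in>Ob (op C). \<exists>S i1 i2 p1 p2. biproduct (op C) X Y S i1 i2 p1 p2"
  proof (intro ballI)
    fix X Y assume XY: "X \<in> Ob (op C)" "Y \<in> Ob (op C)"
    then have "\<exists>S i1 i2 p1 p2. biproduct C X Y S i1 i2 p1 p2" using bp by simp
    then obtain S i1 i2 p1 p2 where bb: "biproduct C X Y S i1 i2 p1 p2" by blast
    have "biproduct (op C) X Y S p1 p2 i1 i2" using biproduct_op[OF bb] .
    then show "\<exists>S i1 i2 p1 p2. biproduct (op C) X Y S i1 i2 p1 p2"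
      by (intro exI[where x=S] exI[where x=p1] exI[where x=p2] exI[where x=i1] exI[where x=i2])
  qed
  moreover have "\<exists>Z. zero_object (op C) Z"
  proof -
    obtain Z where "zero_object C Z" using z by blast
    then have "zero_object (op C) Z" by (rule zero_object_op)
    then show ?thesis by (rule exI)
  qed
  ultimately show ?thesis unfolding additive_def using preadditive_op[OF p] by (intro conjI)
qed

lemma mono_op[simp]: "mono (op C) f = epi C f"
  unfolding mono_def epi_def by auto
lemma epi_op[simp]: "epi (op C) f = mono C f"
  unfolding mono_def epi_def by auto

lemma is_kernel_op[simp]: "is_kernel (op C) f k = is_cokernel C f k"
  unfolding is_kernel_def is_cokernel_def by auto
lemma is_cokernel_op[simp]: "is_cokernel (op C) f k = is_kernel C f k"
  unfolding is_kernel_def is_cokernel_def by auto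
lemma is_kernel_op'[simp]: "is_kernel (op C) f = is_cokernel C f"
  by (rule ext) simp
lemma is_cokernel_op'[simp]: "is_cokernel (op C) f = is_kernel C f"
  by (rule ext) simp

lemma abelian_op: "abelian C \<Longrightarrow> abelian (op C)"
  unfolding abelian_def using additive_op by auto

lemma projective_op[simp]: "projective (op C) P = injective C P"
  unfolding projective_def injective_def by simp
lemma injective_op[simp]: "injective (op C) P = projective C P"
  unfolding projective_def injective_def by simp
lemma projective_op'[simp]: "projective (op C) = injective C" by (rule ext) simp
lemma injective_op'[simp]: "injective (op C) = projective C" by (rule ext) simp

lemma exact_at_op[simp]: "exact_at (op C) f g = exact_at C g f"
  unfolding exact_at_def by auto

lemma proj_resolution_op[simp]: "proj_resolution (op C) X n P d = inj_resolution C X n P d"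
  unfolding proj_resolution_def inj_resolution_def by simp
lemma inj_resolution_op[simp]: "inj_resolution (op C) X n P d = proj_resolution C X n P d"
  unfolding proj_resolution_def inj_resolution_def by simp
lemma proj_resolution_op'[simp]: "proj_resolution (op C) X n P = inj_resolution C X n P" by (rule ext) simp
lemma inj_resolution_op'[simp]: "inj_resolution (op C) X n P = proj_resolution C X n P" by (rule ext) simp

lemma proj_dim_op[simp]: "proj_dim (op C) X = inj_dim C X"
  unfolding proj_dim_def inj_dim_def by simp
lemma inj_dim_op[simp]: "inj_dim (op C) X = proj_dim C X"
  unfolding proj_dim_def inj_dim_def by simp
lemma spdi_op[simp]: "spdi (op C) = sidp C"
  unfolding spdi_def sidp_def by simp
lemma sidp_op[simp]: "sidp (op C) = spdi C"
  unfolding spdi_def sidp_def by simp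
lemma enough_projectives_op[simp]: "enough_projectives (op C) = enough_injectives C"
  unfolding enough_projectives_def enough_injectives_def by simp



context ab begin

lemma proj_lift: "projective C P \<Longrightarrow> epi C e \<Longrightarrow> e \<in> hom C A B \<Longrightarrow> f \<in> hom C P B \<Longrightarrow>
  \<exists>g \<in> hom C P A. cmp C e g = f"
  unfolding projective_def hom_def by auto

lemma inj_ext: "injective C I \<Longrightarrow> mono C m \<Longrightarrow> m \<in> hom C A B \<Longrightarrow> f \<in> hom C A I \<Longrightarrow>
  \<exists>g \<in> hom C B I. cmp C g m = f"
  unfolding injective_def hom_def by auto

lemma exact_epi:
  assumes ep: "enough_projectives C" and ex: "exact_at C f g" and f: "f \<in> hom C A B"
    and g: "g \<in> hom C B D" and k: "is_kernel C g k" and e: "e \<in> hom C A (dom C k)"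
    and ke: "cmp C k e = f"
  shows "epi C e"
  unfolding epi_def
proof (intro conjI ballI impI)
  show "e \<in> Ar C" using e by (simp add: hom_def)
  let ?K = "dom C k"
  fix u v assume u: "u \<in> Ar C" and v: "v \<in> Ar C"
    and c: "dom C u = cod C e \<and> dom C v = cod C e \<and> cod C u = cod C v \<and> cmp C u e = cmp C v e"
  have uh: "u \<in> hom C ?K (cod C u)" using u c e by (simp add: hom_def)
  have vh: "v \<in> hom C ?K (cod C u)" using v c e by (simp add: hom_def)
  have kh: "k \<in> hom C ?K B" by (rule kernel_hom[OF k g])
  have K: "?K \<in> Ob C" using hom_ob kh by blast
  obtain P \<pi> where P: "projective C P" and \<pi>: "\<pi> \<in> hom C P ?K" and pe: "epi C \<pi>"
    using ep K unfolding enough_projectives_def by blast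
  have D: "D \<in> Ob C" using hom_ob g by blast
  have "cmp C g (cmp C k \<pi>) = cmp C (cmp C g k) \<pi>" using assoc[OF \<pi> kh g] .
  also have "\<dots> = zer C P D" using kernel_zero[OF k g] comp_zero_l[OF \<pi> D] by simp
  finally have gz: "cmp C g (cmp C k \<pi>) = zer C P D" .
  obtain y where y: "y \<in> hom C P A" "cmp C f y = cmp C k \<pi>"
    using lift_exact[OF ex f g P comp_hom[OF \<pi> kh] gz] by blast
  have "cmp C k (cmp C e y) = cmp C k \<pi>" using assoc[OF y(1) e kh] ke y(2) by simp
  then have ey: "cmp C e y = \<pi>" using mono_cancel[OF kernel_mono[OF k g] kh comp_hom[OF y(1) e] \<pi>] by blast
  have "cmp C u \<pi> = cmp C v \<pi>" using ey assoc[OF y(1) e uh] assoc[OF y(1) e vh] c by metis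
  then show "u = v" using epi_cancel[OF pe \<pi> uh vh] by blast
qed

lemma syzygy_res:
  assumes ep: "enough_projectives C" and R: "proj_resolution C Y (Suc n) Q dd"
    and i: "is_kernel C (dd 0) \<iota>" and a: "a \<in> hom C (Q 1) (dom C \<iota>)" and ia: "cmp C \<iota> a = dd 1"
  shows "proj_resolution C (dom C \<iota>) n (\<lambda>i. Q (Suc i)) (\<lambda>i. if i = 0 then a else dd (Suc i))"
proof -
  have Rp: "\<And>i. i \<le> Suc n \<Longrightarrow> projective C (Q i)" and R0: "dd 0 \<in> hom C (Q 0) Y"
    and Rs: "\<And>i. i < Suc n \<Longrightarrow> dd (Suc i) \<in> hom C (Q (Suc i)) (Q i)"
    and Re: "epi C (dd 0)" and Rm: "mono C (dd (Suc n))"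
    and Rx: "\<And>i. i < Suc n \<Longrightarrow> exact_at C (dd (Suc i)) (dd i)"
    using R unfolding proj_resolution_def by auto
  have ih: "\<iota> \<in> hom C (dom C \<iota>) (Q 0)" by (rule kernel_hom[OF i R0])
  have im: "mono C \<iota>" by (rule kernel_mono[OF i R0])
  have d1: "dd 1 \<in> hom C (Q 1) (Q 0)" using Rs[of 0] by simp
  have ae: "epi C a" using exact_epi[OF ep Rx[of 0] _ R0 i a] d1 ia by simp
  show ?thesis unfolding proj_resolution_def
  proof (intro conjI allI impI)
    fix j assume "j \<le> n" then show "projective C (Q (Suc j))" using Rp by simp
  next
    show "(if 0 = 0 then a else dd (Suc 0)) \<in> hom C (Q (Suc 0)) (dom C \<iota>)" using a by simp
  next
    fix j assume j: "j < n"
    show "(if Suc j = 0 then a else dd (Suc (Suc j))) \<in> hom C (Q (Suc (Suc j))) (Q (Suc j))"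
      using Rs[of "Suc j"] j by simp
  next
    show "epi C (if 0 = 0 then a else dd (Suc 0))" using ae by simp
  next
    show "mono C (if n = 0 then a else dd (Suc n))"
    proof (cases "n = 0")
      case True
      then have "mono C (cmp C \<iota> a)" using Rm ia by simp
      then show ?thesis using mono_of_comp a ih True by simp
    next
      case False then show ?thesis using Rm by simp
    qed
  next
    fix j assume j: "j < n"
    show "exact_at C (if Suc j = 0 then a else dd (Suc (Suc j))) (if j = 0 then a else dd (Suc j))"
    proof (cases "j = 0")
      case True
      have ex: "exact_at C (dd 2) (cmp C \<iota> a)" using Rx[of 1] j True ia by (simp add: numeral_2_eq_2)
      have d2: "dd 2 \<in> hom C (Q 2) (Q 1)" using Rs[of 1] j True by (simp add: numeral_2_eq_2)
      have "exact_at C (dd 2) a" by (rule exact_transfer[OF ex d2 a ih im])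
      then show ?thesis using True by (simp add: numeral_2_eq_2)
    next
      case False then show ?thesis using Rx[of "Suc j"] j by simp
    qed
  qed
qed

lemma V:
  assumes ep: "enough_projectives C"
  shows "proj_resolution C Y n Q dd \<Longrightarrow> n \<le> k \<Longrightarrow> (\<forall>i\<le>k. injective C (J i)) \<Longrightarrow>
    (\<forall>i<k. e (Suc i) \<in> hom C (J i) (J (Suc i))) \<Longrightarrow>
    (\<forall>i. 1 \<le> i \<and> i < k \<longrightarrow> exact_at C (e i) (e (Suc i))) \<Longrightarrow>
    p \<in> hom C (J k) Z \<Longrightarrow> epi C p \<Longrightarrow> (1 \<le> k \<longrightarrow> exact_at C (e k) p) \<Longrightarrow>
    \<psi> \<in> hom C Y Z \<Longrightarrow> \<exists>s \<in> hom C Y (J k). cmp C p s = \<psi>"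
proof (induction n arbitrary: Y Q dd k Z p \<psi>)
  case 0
  have Q0: "projective C (Q 0)" and R0: "dd 0 \<in> hom C (Q 0) Y" and Re: "epi C (dd 0)"
    and Rm: "mono C (dd 0)" using "0.prems"(1) unfolding proj_resolution_def by auto
  obtain f where f: "f \<in> hom C (Q 0) (J k)" "cmp C p f = cmp C \<psi> (dd 0)"
    using proj_lift[OF Q0 "0.prems"(7,6) comp_hom[OF R0 "0.prems"(9)]] by blast
  obtain \<iota> where i: "is_kernel C (dd 0) \<iota>" using ex_kernel R0 by blast
  have ih: "\<iota> \<in> hom C (dom C \<iota>) (Q 0)" by (rule kernel_hom[OF i R0])
  have iz: "\<iota> = zer C (dom C \<iota>) (Q 0)" using mono_zero[OF Rm R0 ih kernel_zero[OF i R0]] .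
  have Ko: "dom C \<iota> \<in> Ob C" using hom_ob[OF ih] by blast
  have fi: "cmp C f \<iota> = zer C (dom C \<iota>) (J k)"
    using arg_cong[OF iz, of "cmp C f"] comp_zero_r[OF f(1) Ko] by (rule trans)
  obtain s where s: "s \<in> hom C Y (J k)" "cmp C s (dd 0) = f" using epi_fac[OF Re R0 i f(1) fi] by blast
  have "cmp C (cmp C p s) (dd 0) = cmp C \<psi> (dd 0)" using assoc[OF R0 s(1) "0.prems"(6)] s(2) f(2) by simp
  then have "cmp C p s = \<psi>" using epi_cancel[OF Re R0 comp_hom[OF s(1) "0.prems"(6)] "0.prems"(9)] by blast
  then show ?case using s(1) by blast
next
  case (Suc n0)
  note R = Suc.prems(1)
  have Rp: "\<And>i. i \<le> Suc n0 \<Longrightarrow> projective C (Q i)" and R0: "dd 0 \<in> hom C (Q 0) Y"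
    and Rs: "\<And>i. i < Suc n0 \<Longrightarrow> dd (Suc i) \<in> hom C (Q (Suc i)) (Q i)"
    and Re: "epi C (dd 0)" and Rx: "\<And>i. i < Suc n0 \<Longrightarrow> exact_at C (dd (Suc i)) (dd i)"
    using R unfolding proj_resolution_def by auto
  have Jinj: "\<forall>i\<le>k. injective C (J i)" and eh: "\<forall>i<k. e (Suc i) \<in> hom C (J i) (J (Suc i))"
    and ex: "\<forall>i. 1 \<le> i \<and> i < k \<longrightarrow> exact_at C (e i) (e (Suc i))"
    and p: "p \<in> hom C (J k) Z" and pe: "epi C p" and pex: "1 \<le> k \<longrightarrow> exact_at C (e k) p"
    and \<psi>: "\<psi> \<in> hom C Y Z" using Suc.prems by auto
  obtain k0 where k0: "k = Suc k0" using Suc.prems(2) by (cases k) auto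
  have Q0: "projective C (Q 0)" using Rp by simp
  obtain f where f: "f \<in> hom C (Q 0) (J k)" "cmp C p f = cmp C \<psi> (dd 0)"
    using proj_lift[OF Q0 pe p comp_hom[OF R0 \<psi>]] by blast
  obtain \<iota> where i: "is_kernel C (dd 0) \<iota>" using ex_kernel R0 by blast
  let ?K = "dom C \<iota>"
  have ih: "\<iota> \<in> hom C ?K (Q 0)" by (rule kernel_hom[OF i R0])
  have im: "mono C \<iota>" by (rule kernel_mono[OF i R0])
  have K: "?K \<in> Ob C" using hom_ob ih by blast
  obtain kp where kp: "is_kernel C p kp" using ex_kernel p by blast
  let ?Kp = "dom C kp"
  have kph: "kp \<in> hom C ?Kp (J k)" by (rule kernel_hom[OF kp p])
  have kpm: "mono C kp" by (rule kernel_mono[OF kp p])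
  have "cmp C p (cmp C f \<iota>) = cmp C \<psi> (cmp C (dd 0) \<iota>)"
    using assoc[OF ih f(1) p] assoc[OF ih R0 \<psi>] f(2) by simp
  also have "\<dots> = zer C ?K Z" using kernel_zero[OF i R0] comp_zero_r[OF \<psi> K] by simp
  finally have pfi: "cmp C p (cmp C f \<iota>) = zer C ?K Z" .
  obtain \<phi> where \<phi>: "\<phi> \<in> hom C ?K ?Kp" "cmp C kp \<phi> = cmp C f \<iota>"
    using kernel_fac[OF kp p comp_hom[OF ih f(1)] pfi] by blast
  have ek: "e k \<in> hom C (J k0) (J k)" using eh k0 by simp
  have exk: "exact_at C (e k) p" using pex k0 by simp
  have "cmp C p (e k) = zer C (dom C (e k)) (cod C p)" using exk unfolding exact_at_def by blast
  then have pek: "cmp C p (e k) = zer C (J k0) Z" using homD[OF ek] homD[OF p] by simp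
  obtain p' where p': "p' \<in> hom C (J k0) ?Kp" "cmp C kp p' = e k"
    using kernel_fac[OF kp p ek pek] by blast
  have p'e: "epi C p'" by (rule exact_epi[OF ep exk ek p kp p'])
  have d1: "dd 1 \<in> hom C (Q 1) (Q 0)" using Rs[of 0] by simp
  have ex0: "exact_at C (dd 1) (dd 0)" using Rx[of 0] by simp
  have "cmp C (dd 0) (dd 1) = zer C (dom C (dd 1)) (cod C (dd 0))" using ex0 unfolding exact_at_def by blast
  then have dd01: "cmp C (dd 0) (dd 1) = zer C (Q 1) Y" using homD[OF d1] homD[OF R0] by simp
  obtain a where a: "a \<in> hom C (Q 1) ?K" "cmp C \<iota> a = dd 1"
    using kernel_fac[OF i R0 d1 dd01] by blast
  have Rsyz: "proj_resolution C ?K n0 (\<lambda>i. Q (Suc i)) (\<lambda>i. if i = 0 then a else dd (Suc i))"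
    by (rule syzygy_res[OF ep R i a(1) a(2)])
  have exk0: "1 \<le> k0 \<longrightarrow> exact_at C (e k0) p'"
  proof
    assume k1: "1 \<le> k0"
    then obtain k1 where k1': "k0 = Suc k1" by (cases k0) auto
    have ek0: "e k0 \<in> hom C (J k1) (J k0)" using eh k0 k1' by simp
    have "exact_at C (e k0) (e (Suc k0))" using ex k0 k1 by simp
    then have "exact_at C (e k0) (cmp C kp p')" using p'(2) k0 by simp
    then show "exact_at C (e k0) p'" by (rule exact_transfer[OF _ ek0 p'(1) kph kpm])
  qed
  obtain \<phi>' where \<phi>': "\<phi>' \<in> hom C ?K (J k0)" "cmp C p' \<phi>' = \<phi>"
    using Suc.IH[OF Rsyz, where k=k0 and Z="dom C kp" and p=p' and \<psi>=\<phi>] Suc.prems(2) Jinj eh ex p'(1) p'e exk0 \<phi>(1) k0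
    by auto
  have Jk0: "injective C (J k0)" using Jinj k0 by simp
  obtain \<phi>'' where \<phi>'': "\<phi>'' \<in> hom C (Q 0) (J k0)" "cmp C \<phi>'' \<iota> = \<phi>'"
    using inj_ext[OF Jk0 im ih \<phi>'(1)] by blast
  have eph: "cmp C (e k) \<phi>'' \<in> hom C (Q 0) (J k)" using \<phi>''(1) ek by blast
  define g0 where "g0 = add C f (ngt C (cmp C (e k) \<phi>''))"
  have g0h: "g0 \<in> hom C (Q 0) (J k)" unfolding g0_def using add_hom[OF f(1) ngt_hom[OF eph]] .
  have e1: "cmp C (cmp C (e k) \<phi>'') \<iota> = cmp C f \<iota>"
  proof -
    have "cmp C (cmp C (e k) \<phi>'') \<iota> = cmp C (e k) \<phi>'" using assoc[OF ih \<phi>''(1) ek] \<phi>''(2) by simp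
    also have "\<dots> = cmp C kp \<phi>" using p'(2) assoc[OF \<phi>'(1) p'(1) kph] \<phi>'(2) by simp
    finally show ?thesis using \<phi>(2) by simp
  qed
  have "cmp C g0 \<iota> = add C (cmp C f \<iota>) (cmp C (ngt C (cmp C (e k) \<phi>'')) \<iota>)"
    unfolding g0_def using comp_add_r[OF ih f(1) ngt_hom[OF eph]] .
  also have "\<dots> = add C (cmp C f \<iota>) (ngt C (cmp C f \<iota>))" using comp_ngt_r[OF ih eph] e1 by simp
  also have "\<dots> = zer C ?K (J k)" using add_ngt[OF comp_hom[OF ih f(1)]] .
  finally have g0i: "cmp C g0 \<iota> = zer C ?K (J k)" .
  obtain s where s: "s \<in> hom C Y (J k)" "cmp C s (dd 0) = g0" using epi_fac[OF Re R0 i g0h g0i] by blast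
  have Q0o: "Q 0 \<in> Ob C" using hom_ob R0 by blast
  have Zo: "Z \<in> Ob C" using hom_ob p by blast
  have pe2: "cmp C p (cmp C (e k) \<phi>'') = zer C (Q 0) Z"
    using assoc[OF \<phi>''(1) ek p] pek comp_zero_l[OF \<phi>''(1) Zo] by simp
  have "cmp C p g0 = add C (cmp C p f) (cmp C p (ngt C (cmp C (e k) \<phi>'')))"
    unfolding g0_def using comp_add_l[OF f(1) ngt_hom[OF eph] p] .
  also have "\<dots> = add C (cmp C \<psi> (dd 0)) (ngt C (zer C (Q 0) Z))"
    using comp_ngt_l[OF eph p] pe2 f(2) by simp
  also have "\<dots> = cmp C \<psi> (dd 0)"
    using neg_zero[OF Q0o Zo] add_zero[OF comp_hom[OF R0 \<psi>]] by simp
  finally have "cmp C (cmp C p s) (dd 0) = cmp C \<psi> (dd 0)" using assoc[OF R0 s(1) p] s(2) by simp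
  then have "cmp C p s = \<psi>" using epi_cancel[OF Re R0 comp_hom[OF s(1) p] \<psi>] by blast
  then show ?case using s(1) by blast
qed

end


context ab begin

lemma shorten:
  assumes ep: "enough_projectives C" and R: "inj_resolution C X (Suc m0) I d"
    and P: "proj_resolution C (I (Suc m0)) n Q dd" and nm: "n \<le> m0"
  shows "\<exists>I' d'. inj_resolution C X m0 I' d'"
proof -
  have Ri: "\<And>i. i \<le> Suc m0 \<Longrightarrow> injective C (I i)" and d0: "d 0 \<in> hom C X (I 0)"
    and Rs: "\<And>i. i < Suc m0 \<Longrightarrow> d (Suc i) \<in> hom C (I i) (I (Suc i))"
    and Rm: "mono C (d 0)" and Re: "epi C (d (Suc m0))"
    and Rx: "\<And>i. i < Suc m0 \<Longrightarrow> exact_at C (d i) (d (Suc i))"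
    using R unfolding inj_resolution_def by auto
  have dh: "\<And>i. i \<le> Suc m0 \<Longrightarrow> d i \<in> hom C (if i = 0 then X else I (i - 1)) (I i)"
  proof -
    fix i assume i: "i \<le> Suc m0"
    show "d i \<in> hom C (if i = 0 then X else I (i - 1)) (I i)"
    proof (cases i)
      case 0 then show ?thesis using d0 by simp
    next
      case (Suc j) then show ?thesis using Rs[of j] i by simp
    qed
  qed
  let ?dm = "d (Suc m0)"
  have dmh: "?dm \<in> hom C (I m0) (I (Suc m0))" using Rs by simp
  have Im: "I (Suc m0) \<in> Ob C" using hom_ob dmh by blast
  have Im0: "I m0 \<in> Ob C" using hom_ob dmh by blast
  have exs: "\<exists>s \<in> hom C (I (Suc m0)) (I m0). cmp C ?dm s = idm C (I (Suc m0))"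
  proof (rule V[OF ep P nm])
    show "\<forall>i\<le>m0. injective C (I i)" using Ri by simp
    show "\<forall>i<m0. d (Suc i) \<in> hom C (I i) (I (Suc i))" using Rs by simp
    show "\<forall>i. 1 \<le> i \<and> i < m0 \<longrightarrow> exact_at C (d i) (d (Suc i))" using Rx by simp
    show "?dm \<in> hom C (I m0) (I (Suc m0))" by (rule dmh)
    show "epi C ?dm" by (rule Re)
    show "1 \<le> m0 \<longrightarrow> exact_at C (d m0) ?dm" using Rx by simp
    show "idm C (I (Suc m0)) \<in> hom C (I (Suc m0)) (I (Suc m0))" by (rule id_hom[OF Im])
  qed
  then obtain s where s: "s \<in> hom C (I (Suc m0)) (I m0)" "cmp C ?dm s = idm C (I (Suc m0))" by blast
  obtain kk where kk: "is_kernel C ?dm kk" using ex_kernel dmh by blast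
  let ?K = "dom C kk"
  have kkh: "kk \<in> hom C ?K (I m0)" by (rule kernel_hom[OF kk dmh])
  have kkm: "mono C kk" by (rule kernel_mono[OF kk dmh])
  have dmkk: "cmp C ?dm kk = zer C ?K (I (Suc m0))" by (rule kernel_zero[OF kk dmh])
  have Ko: "?K \<in> Ob C" using hom_ob kkh by blast
  have sd: "cmp C s ?dm \<in> hom C (I m0) (I m0)" using s(1) dmh by blast
  define u where "u = add C (idm C (I m0)) (ngt C (cmp C s ?dm))"
  have uh: "u \<in> hom C (I m0) (I m0)" unfolding u_def using add_hom[OF id_hom[OF Im0] ngt_hom[OF sd]] .
  have "cmp C ?dm (cmp C s ?dm) = ?dm" using assoc[OF dmh s(1) dmh] s(2) id_l[OF dmh] by simp
  then have "cmp C ?dm u = add C ?dm (ngt C ?dm)"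
    unfolding u_def using comp_add_l[OF id_hom[OF Im0] ngt_hom[OF sd] dmh] comp_ngt_l[OF sd dmh]
      id_r[OF dmh] by simp
  then have du: "cmp C ?dm u = zer C (I m0) (I (Suc m0))" using add_ngt[OF dmh] by simp
  obtain r where r: "r \<in> hom C (I m0) ?K" "cmp C kk r = u" using kernel_fac[OF kk dmh uh du] by blast
  have "cmp C u kk = add C kk (ngt C (cmp C (cmp C s ?dm) kk))"
    unfolding u_def using comp_add_r[OF kkh id_hom[OF Im0] ngt_hom[OF sd]] comp_ngt_r[OF kkh sd]
      id_l[OF kkh] by simp
  also have "cmp C (cmp C s ?dm) kk = zer C ?K (I m0)"
    using assoc[OF kkh dmh s(1)] dmkk comp_zero_r[OF s(1) Ko] by simp
  finally have "cmp C u kk = kk" using neg_zero[OF Ko Im0] add_zero[OF kkh] by simp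
  then have "cmp C kk (cmp C r kk) = cmp C kk (idm C ?K)" using assoc[OF kkh r(1) kkh] r(2) id_r[OF kkh] by simp
  then have rk: "cmp C r kk = idm C ?K"
    using mono_cancel[OF kkm kkh comp_hom[OF kkh r(1)] id_hom[OF Ko]] by blast
  have Kinj: "injective C ?K" unfolding injective_def
  proof (intro conjI allI impI)
    show "?K \<in> Ob C" by (rule Ko)
    fix \<mu> \<phi> assume a: "mono C \<mu> \<and> \<phi> \<in> hom C (dom C \<mu>) ?K"
    have \<mu>h: "\<mu> \<in> hom C (dom C \<mu>) (cod C \<mu>)" using a unfolding mono_def hom_def by auto
    have I0: "injective C (I m0)" using Ri by simp
    obtain \<psi> where \<psi>: "\<psi> \<in> hom C (cod C \<mu>) (I m0)" "cmp C \<psi> \<mu> = cmp C kk \<phi>"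
      using inj_ext[OF I0 _ \<mu>h comp_hom[OF _ kkh]] a by blast
    have e1: "cmp C (cmp C r \<psi>) \<mu> = cmp C r (cmp C kk \<phi>)" using assoc[OF \<mu>h \<psi>(1) r(1)] \<psi>(2) by simp
    have \<phi>h: "\<phi> \<in> hom C (dom C \<mu>) ?K" using a by blast
    have e2: "cmp C r (cmp C kk \<phi>) = \<phi>" using assoc[OF \<phi>h kkh r(1)] rk id_l[OF \<phi>h] by simp
    have "cmp C (cmp C r \<psi>) \<mu> = \<phi>" using e1 e2 by simp
    then show "\<exists>g\<in>hom C (cod C \<mu>) ?K. cmp C g \<mu> = \<phi>" using comp_hom[OF \<psi>(1) r(1)] by blast
  qed
  let ?A = "if m0 = 0 then X else I (m0 - 1)"
  have dm0: "d m0 \<in> hom C ?A (I m0)" using dh[of m0] by simp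
  have ex0: "exact_at C (d m0) ?dm" using Rx by simp
  have "cmp C ?dm (d m0) = zer C (dom C (d m0)) (cod C ?dm)" using ex0 unfolding exact_at_def by blast
  then have z0: "cmp C ?dm (d m0) = zer C ?A (I (Suc m0))" using homD[OF dm0] homD[OF dmh] by simp
  obtain e' where e': "e' \<in> hom C ?A ?K" "cmp C kk e' = d m0" using kernel_fac[OF kk dmh dm0 z0] by blast
  have e'e: "epi C e'" by (rule exact_epi[OF ep ex0 dm0 dmh kk e'])
  let ?I' = "I(m0 := ?K)" and ?d' = "d(m0 := e')"
  have "inj_resolution C X m0 ?I' ?d'" unfolding inj_resolution_def
  proof (intro conjI allI impI)
    fix i assume "i \<le> m0" then show "injective C (?I' i)" using Kinj Ri by auto
  next
    show "?d' 0 \<in> hom C X (?I' 0)" using d0 e' by (cases "m0 = 0") auto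
  next
    fix i assume i: "i < m0"
    show "?d' (Suc i) \<in> hom C (?I' i) (?I' (Suc i))"
    proof (cases "Suc i = m0")
      case True then show ?thesis using e'(1) by auto
    next
      case False then show ?thesis using Rs[of i] i by auto
    qed
  next
    show "mono C (?d' 0)"
    proof (cases "m0 = 0")
      case True
      then have "mono C (cmp C kk e')" using e'(2) Rm by simp
      then have "mono C e'" using mono_of_comp e'(1) kkh by blast
      then show ?thesis using True by simp
    next
      case False then show ?thesis using Rm by simp
    qed
  next
    show "epi C (?d' m0)" using e'e by simp
  next
    fix i assume i: "i < m0"
    show "exact_at C (?d' i) (?d' (Suc i))"
    proof (cases "Suc i = m0")
      case True
      have di: "d i \<in> hom C (if i = 0 then X else I (i - 1)) (I i)" using dh[of i] i by simp
      have exi: "exact_at C (d i) (cmp C kk e')" using Rx[of i] i True e'(2) by simp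
      have "m0 \<noteq> 0" "m0 - 1 = i" using True by auto
      then have e'i: "e' \<in> hom C (I i) ?K" using e'(1) by simp
      have "exact_at C (d i) e'" by (rule exact_transfer[OF exi di e'i kkh kkm])
      then show ?thesis using True i by simp
    next
      case False then show ?thesis using Rx[of i] i by simp
    qed
  qed
  then show ?thesis by blast
qed

end

lemma INF_enat_attain:
  assumes "(INF n\<in>S. enat n) \<noteq> \<infinity>"
  shows "S \<noteq> {} \<and> (INF n\<in>S. enat n) = enat (LEAST n. n \<in> S)"
proof -
  have ne: "S \<noteq> {}" using assms by (auto simp: top_enat_def[symmetric])
  then obtain x where x: "x \<in> S" by blast
  have L: "(LEAST n. n \<in> S) \<in> S" using LeastI[of "\<lambda>n. n \<in> S", OF x] .
  have "(INF n\<in>S. enat n) \<le> enat (LEAST n. n \<in> S)" using L by (rule INF_lower)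
  moreover have "enat (LEAST n. n \<in> S) \<le> (INF n\<in>S. enat n)"
    by (rule INF_greatest) (simp add: Least_le)
  ultimately show ?thesis using ne by simp
qed

lemma inj_dim_bound:
  assumes ab: "abelian C" and ep: "enough_projectives C"
    and pd: "\<forall>I. injective C I \<longrightarrow> proj_dim C I \<le> enat n"
    and fin: "inj_dim C X \<noteq> \<infinity>"
  shows "inj_dim C X \<le> enat n"
proof -
  interpret ab C by (rule ab.intro[OF ab])
  let ?S = "{m. \<exists>I d. inj_resolution C X m I d}"
  have idd: "inj_dim C X = (INF n\<in>?S. enat n)" unfolding inj_dim_def ..
  have att: "?S \<noteq> {} \<and> (INF n\<in>?S. enat n) = enat (LEAST m. m \<in> ?S)"
    by (rule INF_enat_attain) (use fin idd in simp)
  let ?m = "LEAST m. m \<in> ?S"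
  have mS: "?m \<in> ?S" using att by (metis LeastI all_not_in_conv)
  show ?thesis
  proof (rule ccontr)
    assume "\<not> inj_dim C X \<le> enat n"
    then have "\<not> enat ?m \<le> enat n" using att idd by simp
    then have mn: "n < ?m" by simp
    then obtain m0 where m0: "?m = Suc m0" using less_imp_Suc_add by blast
    have "Suc m0 \<in> ?S" using mS unfolding m0 .
    then obtain I d where R: "inj_resolution C X (Suc m0) I d" by blast
    have "injective C (I (Suc m0))" using R unfolding inj_resolution_def by blast
    then have pdI: "proj_dim C (I (Suc m0)) \<le> enat n" using pd by blast
    let ?T = "{n. \<exists>P d. proj_resolution C (I (Suc m0)) n P d}"
    have pdd: "proj_dim C (I (Suc m0)) = (INF n\<in>?T. enat n)" unfolding proj_dim_def ..
    have "proj_dim C (I (Suc m0)) \<noteq> \<infinity>" using pdI by (cases "proj_dim C (I (Suc m0))") auto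
    then have att2: "?T \<noteq> {} \<and> (INF n\<in>?T. enat n) = enat (LEAST n. n \<in> ?T)"
      by (intro INF_enat_attain) (simp add: pdd)
    let ?n' = "LEAST n. n \<in> ?T"
    have "?n' \<in> ?T" using att2 by (metis LeastI all_not_in_conv)
    then obtain Q dd where P: "proj_resolution C (I (Suc m0)) ?n' Q dd" by blast
    have "enat ?n' \<le> enat n" using att2 pdI pdd by simp
    then have "?n' \<le> m0" using mn m0 by simp
    then obtain I' d' where "inj_resolution C X m0 I' d'" using shorten[OF ep R P] by blast
    then have "m0 \<in> ?S" by blast
    then have "?m \<le> m0" by (rule Least_le)
    then show False using m0 by simp
  qed
qed

lemma sidp_le_spdi:
  assumes ab: "abelian C" and ep: "enough_projectives C"
    and f1: "spdi C \<noteq> \<infinity>" and f2: "sidp C \<noteq> \<infinity>"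
  shows "sidp C \<le> spdi C"
proof -
  obtain n where n: "spdi C = enat n" using f1 by (cases "spdi C") auto
  have pd: "\<forall>I. injective C I \<longrightarrow> proj_dim C I \<le> enat n"
  proof (intro allI impI)
    fix I assume "injective C I"
    then have "proj_dim C I \<le> spdi C" unfolding spdi_def by (intro SUP_upper) simp
    then show "proj_dim C I \<le> enat n" using n by simp
  qed
  have "\<And>P. projective C P \<Longrightarrow> inj_dim C P \<le> enat n"
  proof -
    fix P assume P: "projective C P"
    have "inj_dim C P \<le> sidp C" unfolding sidp_def using P by (intro SUP_upper) simp
    then have "inj_dim C P \<noteq> \<infinity>" using f2 by (cases "inj_dim C P") auto
    then show "inj_dim C P \<le> enat n" using inj_dim_bound[OF ab ep pd] by blast
  qed
  then have "sidp C \<le> enat n" unfolding sidp_def by (intro SUP_least) simp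
  then show ?thesis using n by simp
qed

theorem lemmaA2:
  fixes C :: "('o, 'm) cat"
  assumes "abelian C"
    and "enough_projectives C"
    and "enough_injectives C"
    and "spdi C \<noteq> \<infinity>"
    and "sidp C \<noteq> \<infinity>"
  shows "spdi C = sidp C"
proof -
  have "sidp C \<le> spdi C" using sidp_le_spdi assms by blast
  moreover have "sidp (op C) \<le> spdi (op C)"
  proof (rule sidp_le_spdi)
    show "abelian (op C)" using abelian_op assms(1) .
    show "enough_projectives (op C)" using assms(3) by simp
    show "spdi (op C) \<noteq> \<infinity>" using assms(5) by simp
    show "sidp (op C) \<noteq> \<infinity>" using assms(4) by simp
  qed
  ultimately show ?thesis by simp
qed

end
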